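(* Let $K\ge 2$, let $T\ge1$, and let $\mathbf{x}(t)\in[0,1]^K$, $t=1,\dots,T$, be any fixed sequence of reward vectors. Run the algorithm REX3 described in the context with transfer function $\psi$ equal to the identity and parameter $\gamma\in(0,\tfrac12)$. Then $$\mathbb{G}_{max}-\mathbb{E}(\mathbb{G}_{alg})\le \frac{K}{\gamma}\ln(K)+\gamma\tau,\qquad \text{where } \tau=e\cdot\mathbb{E}\mathbb{G}_{alg}-(4-e)\cdot\mathbb{E}\mathbb{G}_{unif}.$$
   Context: Adversarial utility-based dueling bandit setting: there are $K$ arms; before play, an (oblivious) environment fixes a horizon $T$ and reward vectors $\mathbf{x}(t)=(x_1(t),\dots,x_K(t))\in[0,1]^K$ for $t=1,\dots,T$. At each round the learner selects a pair of arms $(a_t,b_t)$ and observes only the relative feedback $\psi(x_{a_t}(t)-x_{b_t}(t))$, here with $\psi(z)=z$. Algorithm REX3 with parameter $\gamma$: initialize $w_i(1)=1$ for all $i$. At each round $t$: set $p_i(t)=(1-\gamma)\frac{w_i(t)}{\sum_{j=1}^K w_j(t)}+\frac{\gamma}{K}$; draw two arms $a_t,b_t$ independently according to $\mathbf{p}(t)=(p_1(t),\dots,p_K(t))$; receive $\psi(x_{a_t}(t)-x_{b_t}(t))$; if $a_t\neq b_t$, set $w_{a_t}(t+1)=w_{a_t}(t)\exp\!\big(\frac{\gamma}{K}\frac{\psi(x_{a_t}-x_{b_t})}{2p_{a_t}(t)}\big)$ and $w_{b_t}(t+1)=w_{b_t}(t)\exp\!\big(-\frac{\gamma}{K}\frac{\psi(x_{a_t}-x_{b_t})}{2p_{b_t}(t)}\big)$;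 other weights unchanged. Notation: $\mathbb{G}_{max}=\max_i\sum_{t=1}^T x_i(t)$ (best single-arm gain); $\mathbb{G}_{alg}=\frac12\sum_{t=1}^T\big(x_{a_t}(t)+x_{b_t}(t)\big)$ (gain of the algorithm); $\mathbb{E}\mathbb{G}_{unif}=\frac1K\sum_{t=1}^T\sum_{i=1}^K x_i(t)$. Expectations are over the algorithm's internal randomization. *)

theory Defs
  imports "HOL-Probability.Probability_Mass_Function"
begin

text \<open>Arms are 0..K-1; rounds are 1..T; x t i is the reward of arm i in round t.
  The transfer function psi is the identity.\<close>

definition rex3_prob :: "nat \<Rightarrow> real \<Rightarrow> (nat \<Rightarrow> real) \<Rightarrow> nat \<Rightarrow> real" where
  "rex3_prob K \<gamma> w i = (1 - \<gamma>) * w i / (\<Sum>j<K. w j) + \<gamma> / real K"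

definition rex3_draw :: "nat \<Rightarrow> real \<Rightarrow> (nat \<Rightarrow> real) \<Rightarrow> nat pmf" where
  "rex3_draw K \<gamma> w = embed_pmf (\<lambda>i. if i < K then rex3_prob K \<gamma> w i else 0)"

definition rex3_pairs :: "nat \<Rightarrow> real \<Rightarrow> (nat \<Rightarrow> real) \<Rightarrow> (nat \<times> nat) pmf" where
  "rex3_pairs K \<gamma> w = pair_pmf (rex3_draw K \<gamma> w) (rex3_draw K \<gamma> w)"

definition rex3_update :: "nat \<Rightarrow> real \<Rightarrow> (nat \<Rightarrow> real) \<Rightarrow> (nat \<Rightarrow> real) \<Rightarrow> nat \<times> nat \<Rightarrow> (nat \<Rightarrow> real)" where
  "rex3_update K \<gamma> xt w ab = (case ab of (a, b) \<Rightarrow>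
     if a = b then w
     else w(a := w a * exp (\<gamma> / real K * (xt a - xt b) / (2 * rex3_prob K \<gamma> w a)),
            b := w b * exp (- (\<gamma> / real K * (xt a - xt b) / (2 * rex3_prob K \<gamma> w b)))))"

text \<open>rex3_weights K gamma x n = distribution of the weight vector after n rounds
  (i.e. w(n+1)).\<close>
primrec rex3_weights :: "nat \<Rightarrow> real \<Rightarrow> (nat \<Rightarrow> nat \<Rightarrow> real) \<Rightarrow> nat \<Rightarrow> (nat \<Rightarrow> real) pmf" where
  "rex3_weights K \<gamma> x 0 = return_pmf (\<lambda>_. 1)"
| "rex3_weights K \<gamma> x (Suc n) =
     rex3_weights K \<gamma> x n \<bind>
       (\<lambda>w. map_pmf (rex3_update K \<gamma> (x (Suc n)) w) (rex3_pairs K \<gamma> w))"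

definition rex3_choice :: "nat \<Rightarrow> real \<Rightarrow> (nat \<Rightarrow> nat \<Rightarrow> real) \<Rightarrow> nat \<Rightarrow> (nat \<times> nat) pmf" where
  "rex3_choice K \<gamma> x t = rex3_weights K \<gamma> x (t - 1) \<bind> rex3_pairs K \<gamma>"

definition rex3_expected_gain :: "nat \<Rightarrow> real \<Rightarrow> nat \<Rightarrow> (nat \<Rightarrow> nat \<Rightarrow> real) \<Rightarrow> real" where
  "rex3_expected_gain K \<gamma> T x =
     (\<Sum>t\<in>{1..T}. measure_pmf.expectation (rex3_choice K \<gamma> x t)
                     (\<lambda>(a, b). (x t a + x t b) / 2))"

definition G_max :: "nat \<Rightarrow> nat \<Rightarrow> (nat \<Rightarrow> nat \<Rightarrow> real) \<Rightarrow> real" where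
  "G_max K T x = Max ((\<lambda>i. \<Sum>t\<in>{1..T}. x t i) ` {..<K})"

definition EG_unif :: "nat \<Rightarrow> nat \<Rightarrow> (nat \<Rightarrow> nat \<Rightarrow> real) \<Rightarrow> real" where
  "EG_unif K T x = (1 / real K) * (\<Sum>t\<in>{1..T}. \<Sum>i<K. x t i)"

end

theory Submission imports Defs begin

lemma exp_quad:
  fixes y :: real assumes "\<bar>y\<bar> \<le> 1/2"
  shows "exp y \<le> 1 + y + (2/3) * y^2"
proof -
  obtain t where t: "\<bar>t\<bar> \<le> \<bar>y\<bar>" and e: "exp y = (\<Sum>m<3. y ^ m / fact m) + exp t / fact 3 * y ^ 3"
    using Maclaurin_exp_le[of y 3] by blast
  have s: "(\<Sum>m<3. y ^ m / fact m) = 1 + y + y^2/2"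
    by (simp add: eval_nat_numeral)
  have "exp t \<le> exp (1/2)" using t assms by simp
  also have "\<dots> \<le> 2" by (rule exp_half_le2)
  finally have et: "exp t \<le> 2" .
  have y3: "y^3 \<le> \<bar>y\<bar>^3" by (metis abs_ge_self power_abs)
  have "exp t / fact 3 * y ^ 3 \<le> 2 / 6 * \<bar>y\<bar>^3"
  proof -
    have "exp t / fact 3 * y ^ 3 \<le> exp t / 6 * \<bar>y\<bar>^3"
      using y3 by (simp add: eval_nat_numeral mult_left_mono)
    also have "\<dots> \<le> 2 / 6 * \<bar>y\<bar>^3" using et by (intro mult_right_mono) auto
    finally show ?thesis .
  qed
  also have "\<dots> \<le> 1/6 * y^2"
  proof -
    have "\<bar>y\<bar>^3 = \<bar>y\<bar> * y^2" by (simp add: power2_eq_square power3_eq_cube abs_mult)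
    also have "\<dots> \<le> 1/2 * y^2" using assms by (intro mult_right_mono) auto
    finally show ?thesis by simp
  qed
  finally show ?thesis using e s by simp
qed

lemma e_ge: "8/3 \<le> exp (1::real)"
proof -
  obtain t where e: "exp (1::real) = (\<Sum>m<4. 1 ^ m / fact m) + exp t / fact 4 * 1 ^ 4"
    using Maclaurin_exp_le[of 1 4] by blast
  have "(\<Sum>m<4. (1::real) ^ m / fact m) = 8/3" by (simp add: eval_nat_numeral fact_numeral)
  moreover have "0 \<le> exp t / fact 4 * (1::real) ^ 4" by simp
  ultimately show ?thesis using e by linarith
qed

lemma E_fin:
  fixes f :: "'a \<Rightarrow> real"
  assumes "finite (set_pmf M)"
  shows "measure_pmf.expectation M f = (\<Sum>x\<in>set_pmf M. f x * pmf M x)"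
  using assms by (intro integral_measure_pmf_real) auto

lemma E_bind:
  fixes f :: "'b \<Rightarrow> real"
  assumes fin: "finite (set_pmf M)" and finN: "\<And>y. y \<in> set_pmf M \<Longrightarrow> finite (set_pmf (N y))"
  shows "measure_pmf.expectation (bind_pmf M N) f
       = measure_pmf.expectation M (\<lambda>y. measure_pmf.expectation (N y) f)"
proof -
  let ?S = "set_pmf (bind_pmf M N)"
  have finS: "finite ?S" using fin finN by simp
  have "measure_pmf.expectation (bind_pmf M N) f = (\<Sum>z\<in>?S. f z * pmf (bind_pmf M N) z)"
    by (rule E_fin[OF finS])
  also have "\<dots> = (\<Sum>z\<in>?S. f z * (\<Sum>y\<in>set_pmf M. pmf (N y) z * pmf M y))"
    by (intro sum.cong refl, simp only: pmf_bind E_fin[OF fin])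
  also have "\<dots> = (\<Sum>z\<in>?S. \<Sum>y\<in>set_pmf M. f z * pmf (N y) z * pmf M y)"
    by (simp add: sum_distrib_left mult.assoc)
  also have "\<dots> = (\<Sum>y\<in>set_pmf M. \<Sum>z\<in>?S. f z * pmf (N y) z * pmf M y)"
    by (rule sum.swap)
  also have "\<dots> = (\<Sum>y\<in>set_pmf M. (\<Sum>z\<in>?S. f z * pmf (N y) z) * pmf M y)"
    by (simp add: sum_distrib_right)
  also have "\<dots> = (\<Sum>y\<in>set_pmf M. measure_pmf.expectation (N y) f * pmf M y)"
  proof (intro sum.cong refl)
    fix y assume y: "y \<in> set_pmf M"
    have "measure_pmf.expectation (N y) f = (\<Sum>z\<in>?S. f z * pmf (N y) z)"
      using y finS by (intro integral_measure_pmf_real) auto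
    then show "(\<Sum>z\<in>?S. f z * pmf (N y) z) * pmf M y = measure_pmf.expectation (N y) f * pmf M y"
      by simp
  qed
  also have "\<dots> = measure_pmf.expectation M (\<lambda>y. measure_pmf.expectation (N y) f)"
    by (rule E_fin[OF fin, symmetric])
  finally show ?thesis .
qed

lemma E_mono_fin:
  fixes f h :: "'a \<Rightarrow> real"
  assumes "finite (set_pmf M)" "\<And>x. x \<in> set_pmf M \<Longrightarrow> f x \<le> h x"
  shows "measure_pmf.expectation M f \<le> measure_pmf.expectation M h"
  using assms by (simp add: E_fin, intro sum_mono mult_right_mono) auto

lemma E_affine:
  fixes f :: "'a \<Rightarrow> real"
  assumes "finite (set_pmf M)"
  shows "measure_pmf.expectation M (\<lambda>w. \<alpha> + \<beta> * f w) = \<alpha> + \<beta> * measure_pmf.expectation M f"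
proof -
  have "measure_pmf.expectation M (\<lambda>w. \<alpha> + \<beta> * f w)
      = \<alpha> * (\<Sum>x\<in>set_pmf M. pmf M x) + \<beta> * (\<Sum>x\<in>set_pmf M. f x * pmf M x)"
    using assms by (simp add: E_fin distrib_right sum.distrib sum_distrib_left mult.assoc)
  also have "(\<Sum>x\<in>set_pmf M. pmf M x) = 1" using assms by (intro sum_pmf_eq_1) auto
  finally show ?thesis using assms by (simp add: E_fin)
qed

lemma E_diff_fin:
  fixes f h :: "'a \<Rightarrow> real"
  assumes "finite (set_pmf M)"
  shows "measure_pmf.expectation M (\<lambda>w. f w - h w) = measure_pmf.expectation M f - measure_pmf.expectation M h"
  using assms by (simp add: E_fin left_diff_distrib sum_subtractf)

lemma phi_alg:
  fixes eta K c LW' LW lK SL u1 u2 LJ ja jb qa qb Da Db :: real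
  assumes e: "0 < eta" and K: "0 < K"
    and key: "c * LW' \<le> c * (LW + qa * (eta * u1) + (2/3) * eta^2 * Da + qb * (eta * u2) + (2/3) * eta^2 * Db)"
  shows "(c * LW' - (c - 1) * (lK + (SL + eta * u1 + eta * u2) / K) - (LJ + ja * (eta * u1) + jb * (eta * u2))) / eta
    \<le> (c * LW - (c - 1) * (lK + SL / K) - LJ) / eta
      + (c * (qa * u1 + qb * u2) + c * (2/3) * eta * (Da + Db) - (c - 1) / K * (u1 + u2) - (ja * u1 + jb * u2))"
proof -
  have eq: "(c * LW' - (c - 1) * (lK + (SL + eta * u1 + eta * u2) / K) - (LJ + ja * (eta * u1) + jb * (eta * u2))) / eta
    = (c * LW - (c - 1) * (lK + SL / K) - LJ) / eta
      + (c * (qa * u1 + qb * u2) + c * (2/3) * eta * (Da + Db) - (c - 1) / K * (u1 + u2) - (ja * u1 + jb * u2))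
      + (c * LW' - c * (LW + qa * (eta * u1) + (2/3) * eta^2 * Da + qb * (eta * u2) + (2/3) * eta^2 * Db)) / eta"
    using e K by (simp add: field_simps power2_eq_square)
  have "(c * LW' - c * (LW + qa * (eta * u1) + (2/3) * eta^2 * Da + qb * (eta * u2) + (2/3) * eta^2 * Db)) / eta \<le> 0"
    using key e by (simp add: divide_nonpos_pos)
  then show ?thesis unfolding eq by linarith
qed

locale rex =
  fixes K T :: nat and g :: real and x :: "nat \<Rightarrow> nat \<Rightarrow> real"
  assumes K2: "K \<ge> 2"
    and xb: "\<And>t i. t \<in> {1..T} \<Longrightarrow> i < K \<Longrightarrow> 0 \<le> x t i \<and> x t i \<le> 1"
    and g0: "0 < g" and g1: "g < 1/2"
begin

definition "eta = g / real K"
definition "c = (1 - g) * (1 + 2*g)"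
abbreviation "P w i \<equiv> rex3_prob K g w i"
definition wpos :: "(nat \<Rightarrow> real) \<Rightarrow> bool" where "wpos w \<longleftrightarrow> (\<forall>i<K. 0 < w i)"
definition E2 :: "(nat \<Rightarrow> real) \<Rightarrow> (nat \<Rightarrow> nat \<Rightarrow> real) \<Rightarrow> real" where "E2 w h = (\<Sum>a<K. \<Sum>b<K. P w a * P w b * h a b)"

lemma Kpos: "0 < real K" using K2 by simp
lemma eta_pos: "0 < eta" using g0 Kpos by (simp add: eta_def)

lemma W_pos: assumes "wpos w" shows "0 < (\<Sum>i<K. w i)"
proof -
  have "0 \<in> {..<K}" using K2 by simp
  then have "{..<K} \<noteq> {}" by blast
  show ?thesis
    by (rule sum_pos) (use assms \<open>{..<K} \<noteq> {}\<close> in \<open>auto simp: wpos_def\<close>)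
qed

lemma P_ge: assumes "wpos w" "i < K" shows "g / real K \<le> P w i"
proof -
  have "0 \<le> (1 - g) * w i / (\<Sum>j<K. w j)"
    using assms W_pos[OF assms(1)] g1 unfolding wpos_def by (intro divide_nonneg_pos mult_nonneg_nonneg) auto
  then show ?thesis by (simp add: rex3_prob_def)
qed

lemma P_pos: assumes "wpos w" "i < K" shows "0 < P w i"
  using P_ge[OF assms] g0 Kpos by (meson divide_pos_pos order_less_le_trans)

lemma P_sum: assumes "wpos w" shows "(\<Sum>i<K. P w i) = 1"
proof -
  have W: "(\<Sum>j<K. w j) \<noteq> 0" using W_pos[OF assms] by simp
  have "(\<Sum>i<K. P w i) = (1 - g) * (\<Sum>i<K. w i) / (\<Sum>j<K. w j) + real K * (g / real K)"
    by (simp add: rex3_prob_def sum.distrib sum_divide_distrib[symmetric] sum_distrib_left)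
  also have "\<dots> = 1" using W Kpos by simp
  finally show ?thesis .
qed

lemma q_eq: assumes "wpos w" shows "w i / (\<Sum>k<K. w k) = (P w i - g / real K) / (1 - g)"
proof -
  have "P w i - g / real K = (1 - g) * (w i / (\<Sum>k<K. w k))" by (simp add: rex3_prob_def)
  then show ?thesis using g1 by simp
qed

lemma draw_pmf: assumes "wpos w"
  shows "pmf (rex3_draw K g w) i = (if i < K then P w i else 0)"
  unfolding rex3_draw_def
proof (rule pmf_embed_pmf)
  show "\<And>i. 0 \<le> (if i < K then P w i else 0)" using P_pos[OF assms] by (simp add: less_imp_le)
  have "(\<integral>\<^sup>+ i. ennreal (if i < K then P w i else 0) \<partial>count_space UNIV)
      = (\<Sum>i<K. ennreal (if i < K then P w i else 0))"
    by (rule nn_integral_count_space') auto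
  also have "\<dots> = (\<Sum>i<K. ennreal (P w i))" by simp
  also have "\<dots> = ennreal (\<Sum>i<K. P w i)" using P_pos[OF assms] by (intro sum_ennreal) (auto simp: less_imp_le)
  also have "\<dots> = 1" using P_sum[OF assms] by simp
  finally show "(\<integral>\<^sup>+ i. ennreal (if i < K then P w i else 0) \<partial>count_space UNIV) = 1" .
qed

lemma set_draw: assumes "wpos w" shows "set_pmf (rex3_draw K g w) \<subseteq> {..<K}"
  using draw_pmf[OF assms] by (auto simp: set_pmf_iff split: if_splits)

lemma set_pairs: assumes "wpos w" shows "set_pmf (rex3_pairs K g w) \<subseteq> {..<K} \<times> {..<K}"
  using set_draw[OF assms] by (auto simp: rex3_pairs_def)

lemma E_pairs: assumes "wpos w"
  shows "measure_pmf.expectation (rex3_pairs K g w) f = E2 w (\<lambda>a b. f (a, b))"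
proof -
  have "measure_pmf.expectation (rex3_pairs K g w) f = (\<Sum>ab\<in>{..<K} \<times> {..<K}. f ab * pmf (rex3_pairs K g w) ab)"
    using set_pairs[OF assms] by (intro integral_measure_pmf_real) auto
  also have "\<dots> = (\<Sum>a<K. \<Sum>b<K. f (a, b) * pmf (rex3_pairs K g w) (a, b))"
    by (simp add: sum.cartesian_product)
  also have "\<dots> = E2 w (\<lambda>a b. f (a, b))"
    unfolding E2_def rex3_pairs_def pmf_pair draw_pmf[OF assms]
    by (intro sum.cong refl) (auto simp: ac_simps)
  finally show ?thesis .
qed

lemma upd_pos: assumes "wpos w" shows "wpos (rex3_update K g xt w ab)"
  using assms unfolding wpos_def rex3_update_def by (auto split: prod.splits)

lemma weights_inv:
  "finite (set_pmf (rex3_weights K g x n)) \<and> (\<forall>w\<in>set_pmf (rex3_weights K g x n). wpos w)"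
proof (induction n)
  case 0
  then show ?case by (simp add: wpos_def)
next
  case (Suc n)
  have fin: "finite (set_pmf (rex3_pairs K g w))" if "wpos w" for w
    using set_pairs[OF that] by (rule finite_subset) auto
  show ?case using Suc fin upd_pos by auto
qed

definition qq :: "(nat \<Rightarrow> real) \<Rightarrow> nat \<Rightarrow> real" where "qq w i = w i / (\<Sum>k<K. w k)"
definition ua :: "(nat \<Rightarrow> real) \<Rightarrow> (nat \<Rightarrow> real) \<Rightarrow> nat \<Rightarrow> nat \<Rightarrow> real" where "ua xt w a b = (xt a - xt b) / (2 * P w a)"
definition ub :: "(nat \<Rightarrow> real) \<Rightarrow> (nat \<Rightarrow> real) \<Rightarrow> nat \<Rightarrow> nat \<Rightarrow> real" where "ub xt w a b = - (xt a - xt b) / (2 * P w b)"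
definition Phi :: "nat \<Rightarrow> (nat \<Rightarrow> real) \<Rightarrow> real" where "Phi j w = (c * ln (\<Sum>i<K. w i) - (c - 1) * (ln (real K) + (\<Sum>i<K. ln (w i)) / real K) - ln (w j)) / eta"
definition Bf :: "(nat \<Rightarrow> real) \<Rightarrow> nat \<Rightarrow> (nat \<Rightarrow> real) \<Rightarrow> nat \<Rightarrow> nat \<Rightarrow> real" where "Bf xt j w a b = c * (qq w a * ua xt w a b + qq w b * ub xt w a b)
   + c * (2/3) * eta * ((xt a - xt b)^2 / (4 * (1 - g) * P w a) + (xt a - xt b)^2 / (4 * (1 - g) * P w b))
   - (c - 1) / real K * (ua xt w a b + ub xt w a b)
   - ((if j = a then 1 else 0) * ua xt w a b + (if j = b then 1 else 0) * ub xt w a b)"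

lemma c_eq: "c = 1 + g * (1 - 2 * g)" by (simp add: c_def algebra_simps)
lemma c_ge1: "1 \<le> c"
proof -
  have "0 \<le> g * (1 - 2 * g)" using g0 g1 by simp
  then show ?thesis using c_eq by linarith
qed

lemma qq_le: assumes "wpos w" "i < K" shows "qq w i \<le> P w i / (1 - g)"
proof -
  have "qq w i = (P w i - g / real K) / (1 - g)" unfolding qq_def by (rule q_eq[OF assms(1)])
  also have "\<dots> \<le> P w i / (1 - g)" using g0 g1 Kpos by (intro divide_right_mono) auto
  finally show ?thesis .
qed

lemma qq_nonneg: assumes "wpos w" "i < K" shows "0 \<le> qq w i"
proof -
  have "0 < w i" using assms unfolding wpos_def by auto
  then show ?thesis unfolding qq_def using W_pos[OF assms(1)] by (intro divide_nonneg_pos) auto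
qed

lemma step_bound:
  assumes w: "wpos w" and a: "a < K" and ab: "\<bar>d\<bar> \<le> 1" and u: "u = d / (2 * P w a) \<or> u = - d / (2 * P w a)"
  shows "qq w a * (exp (eta * u) - 1) \<le> qq w a * (eta * u) + (2/3) * eta^2 * (d^2 / (4 * (1 - g) * P w a))"
proof -
  have Pa: "0 < P w a" using P_pos[OF w a] .
  have "eta * \<bar>d\<bar> \<le> eta * 1" using ab eta_pos by (intro mult_left_mono) auto
  also have "\<dots> \<le> P w a" using P_ge[OF w a] by (simp add: eta_def)
  finally have ed: "eta * \<bar>d\<bar> \<le> P w a" .
  have "\<bar>eta * u\<bar> = eta * \<bar>d\<bar> / (2 * P w a)" using u eta_pos Pa by (auto simp: abs_mult abs_divide)
  also have "\<dots> \<le> 1/2" using ed Pa by (simp add: divide_simps)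
  finally have "\<bar>eta * u\<bar> \<le> 1/2" .
  then have e: "exp (eta * u) - 1 \<le> eta * u + (2/3) * (eta * u)^2" using exp_quad by fastforce
  have q0: "0 \<le> qq w a" by (rule qq_nonneg[OF w a])
  have "qq w a * u^2 \<le> P w a / (1 - g) * u^2" by (intro mult_right_mono qq_le[OF w a]) auto
  also have "P w a / (1 - g) * u^2 = d^2 / (4 * (1 - g) * P w a)"
  proof -
    have usq: "u^2 = (d / (2 * P w a))^2" using u by (auto simp: power2_eq_square)
    show ?thesis unfolding usq using Pa g1 by (simp add: power2_eq_square field_simps)
  qed
  finally have qu: "qq w a * u^2 \<le> d^2 / (4 * (1 - g) * P w a)" .
  have "qq w a * (exp (eta * u) - 1) \<le> qq w a * (eta * u + (2/3) * (eta * u)^2)"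
    using e q0 by (intro mult_left_mono) auto
  also have "\<dots> = qq w a * (eta * u) + (2/3) * eta^2 * (qq w a * u^2)"
    by (simp add: algebra_simps power2_eq_square)
  also have "\<dots> \<le> qq w a * (eta * u) + (2/3) * eta^2 * (d^2 / (4 * (1 - g) * P w a))"
    using qu by (intro add_left_mono mult_left_mono) auto
  finally show ?thesis .
qed

lemma pathwise:
  assumes w: "wpos w" and a: "a < K" and b: "b < K" and j: "j < K"
    and xt: "\<And>i. i < K \<Longrightarrow> 0 \<le> xt i \<and> xt i \<le> 1"
  shows "Phi j (rex3_update K g xt w (a, b)) \<le> Phi j w + Bf xt j w a b"
proof (cases "a = b")
  case True
  then show ?thesis by (simp add: rex3_update_def Bf_def ua_def ub_def)
next
  case False
  define d where "d = xt a - xt b"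
  define W where "W = (\<Sum>k<K. w k)"
  define u1 where "u1 = ua xt w a b"
  define u2 where "u2 = ub xt w a b"
  define ea where "ea = exp (eta * u1)"
  define eb where "eb = exp (eta * u2)"
  define w' where "w' = w(a := w a * ea, b := w b * eb)"
  have Pa: "0 < P w a" using P_pos[OF w a] .
  have Pb: "0 < P w b" using P_pos[OF w b] .
  have Wp: "0 < W" using W_pos[OF w] by (simp add: W_def)
  have wa: "0 < w a" using w a by (simp add: wpos_def)
  have wb: "0 < w b" using w b by (simp add: wpos_def)
  have absd: "\<bar>d\<bar> \<le> 1" using xt[OF a] xt[OF b] by (simp add: d_def abs_le_iff)
  have e1: "g / real K * (xt a - xt b) / (2 * P w a) = eta * u1"
    unfolding eta_def u1_def ua_def by simp
  have e2: "- (g / real K * (xt a - xt b) / (2 * P w b)) = eta * u2"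
    unfolding eta_def u2_def ub_def by (simp only: minus_divide_left mult_minus_right times_divide_eq_right)
  have upd: "rex3_update K g xt w (a, b) = w'"
    unfolding rex3_update_def prod.case e1 e2 w'_def ea_def eb_def using False by simp
  have w'i: "\<And>i. w' i = w i + (if i = a then w a * (ea - 1) else 0) + (if i = b then w b * (eb - 1) else 0)"
    using False by (auto simp: w'_def algebra_simps)
  have sumW': "(\<Sum>i<K. w' i) = W + w a * (ea - 1) + w b * (eb - 1)"
    using a b by (simp add: w'i sum.distrib W_def)
  have lnw'i: "ln (w' i) = ln (w i) + (if i = a then eta * u1 else 0) + (if i = b then eta * u2 else 0)"
    if "i < K" for i
    using False w that by (auto simp: w'_def ea_def eb_def wpos_def ln_mult)
  have "(\<Sum>i<K. ln (w' i)) = (\<Sum>i<K. ln (w i) + (if i = a then eta * u1 else 0) + (if i = b then eta * u2 else 0))"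
    by (rule sum.cong) (auto simp: lnw'i)
  also have "\<dots> = (\<Sum>i<K. ln (w i)) + eta * u1 + eta * u2" using a b by (simp add: sum.distrib)
  finally have sumln: "(\<Sum>i<K. ln (w' i)) = (\<Sum>i<K. ln (w i)) + eta * u1 + eta * u2" .
  have lnj: "ln (w' j) = ln (w j) + (if j = a then 1 else 0) * (eta * u1) + (if j = b then 1 else 0) * (eta * u2)"
    using lnw'i[OF j] by simp
  have "wpos w'" using upd_pos[OF w, of xt "(a, b)"] upd by simp
  then have W'pos: "0 < (\<Sum>i<K. w' i)" by (rule W_pos)
  have lnW: "ln (\<Sum>i<K. w' i) \<le> ln W + qq w a * (ea - 1) + qq w b * (eb - 1)"
  proof -
    have "ln (\<Sum>i<K. w' i) - ln W = ln ((\<Sum>i<K. w' i) / W)" using W'pos Wp by (simp add: ln_div)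
    also have "\<dots> \<le> (\<Sum>i<K. w' i) / W - 1" using W'pos Wp by (intro ln_le_minus_one) simp
    also have "\<dots> = qq w a * (ea - 1) + qq w b * (eb - 1)" using Wp
      by (simp add: sumW' qq_def W_def[symmetric] field_simps)
    finally show ?thesis by simp
  qed
  define Da where "Da = d^2 / (4 * (1 - g) * P w a)"
  define Db where "Db = d^2 / (4 * (1 - g) * P w b)"
  have ta: "qq w a * (ea - 1) \<le> qq w a * (eta * u1) + (2/3) * eta^2 * Da"
    unfolding ea_def Da_def by (rule step_bound[OF w a absd]) (simp add: u1_def ua_def d_def)
  have absd': "\<bar>- d\<bar> \<le> 1" using absd by simp
  have tb: "qq w b * (eb - 1) \<le> qq w b * (eta * u2) + (2/3) * eta^2 * Db"
    unfolding eb_def Db_def using step_bound[OF w b absd', of u2] unfolding power2_minus by (simp add: u2_def ub_def d_def)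
  have "ln (\<Sum>i<K. w' i) \<le> ln W + qq w a * (eta * u1) + (2/3) * eta^2 * Da + qq w b * (eta * u2) + (2/3) * eta^2 * Db"
    using lnW ta tb by linarith
  then have key: "c * ln (\<Sum>i<K. w' i) \<le> c * (ln W + qq w a * (eta * u1) + (2/3) * eta^2 * Da + qq w b * (eta * u2) + (2/3) * eta^2 * Db)"
    using c_ge1 by (intro mult_left_mono) auto
  have B: "Bf xt j w a b = c * (qq w a * u1 + qq w b * u2) + c * (2/3) * eta * (Da + Db)
      - (c - 1) / real K * (u1 + u2) - ((if j = a then 1 else 0) * u1 + (if j = b then 1 else 0) * u2)"
    by (simp add: Bf_def u1_def u2_def Da_def Db_def d_def)
  have "Phi j w' \<le> Phi j w + Bf xt j w a b"
    unfolding Phi_def sumln lnj B W_def[symmetric]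
    by (rule phi_alg[OF eta_pos Kpos key])
  then show ?thesis using upd by simp
qed

lemma E2_add: "E2 w (\<lambda>a b. f a b + h a b) = E2 w f + E2 w h"
  by (simp add: E2_def distrib_left sum.distrib)
lemma E2_diff: "E2 w (\<lambda>a b. f a b - h a b) = E2 w f - E2 w h"
  by (simp add: E2_def right_diff_distrib sum_subtractf)
lemma E2_cmult: "E2 w (\<lambda>a b. k * f a b) = k * E2 w f"
  by (simp add: E2_def sum_distrib_left ac_simps)
lemma E2_mono:
  assumes w: "wpos w" and le: "\<And>a b. a < K \<Longrightarrow> b < K \<Longrightarrow> f a b \<le> h a b"
  shows "E2 w f \<le> E2 w h"
  unfolding E2_def
proof (intro sum_mono)
  fix a b assume a: "a \<in> {..<K}" and b: "b \<in> {..<K}"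
  have "0 \<le> P w a * P w b" using P_pos[OF w] a b by (simp add: less_imp_le)
  then show "P w a * P w b * f a b \<le> P w a * P w b * h a b"
    using le a b by (intro mult_left_mono) auto
qed
lemma E2_const: assumes w: "wpos w" shows "E2 w (\<lambda>a b. k) = k"
  using P_sum[OF w] by (simp add: E2_def sum_distrib_right[symmetric] sum_distrib_left[symmetric])

definition XX :: "(nat \<Rightarrow> real) \<Rightarrow> (nat \<Rightarrow> real) \<Rightarrow> real" where "XX w xt = (\<Sum>i<K. P w i * xt i)"

lemma G1: assumes w: "wpos w"
  shows "E2 w (\<lambda>a b. F a * ((xt a - xt b) / (2 * P w a))) = 1/2 * (\<Sum>a<K. F a * (xt a - XX w xt))"
proof -
  have inner: "(\<Sum>b<K. P w a * P w b * (F a * ((xt a - xt b) / (2 * P w a)))) = 1/2 * (F a * (xt a - XX w xt))"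
    if a: "a < K" for a
  proof -
    have Pa: "0 < P w a" using P_pos[OF w a] .
    have "(\<Sum>b<K. P w a * P w b * (F a * ((xt a - xt b) / (2 * P w a))))
        = (\<Sum>b<K. F a / 2 * (P w b * xt a - P w b * xt b))"
      using Pa by (intro sum.cong refl) (simp add: field_simps)
    also have "\<dots> = F a / 2 * ((\<Sum>b<K. P w b) * xt a - (\<Sum>b<K. P w b * xt b))"
      by (simp add: sum_distrib_left[symmetric] sum_subtractf sum_distrib_right)
    also have "\<dots> = 1/2 * (F a * (xt a - XX w xt))" using P_sum[OF w] by (simp add: XX_def)
    finally show ?thesis .
  qed
  have "E2 w (\<lambda>a b. F a * ((xt a - xt b) / (2 * P w a))) = (\<Sum>a<K. 1/2 * (F a * (xt a - XX w xt)))"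
    unfolding E2_def by (rule sum.cong[OF refl], rule inner) auto
  then show ?thesis by (simp add: sum_distrib_left)
qed

lemma G2: assumes w: "wpos w"
  shows "E2 w (\<lambda>a b. F b * (- (xt a - xt b) / (2 * P w b))) = 1/2 * (\<Sum>b<K. F b * (xt b - XX w xt))"
proof -
  have inner: "(\<Sum>a<K. P w a * P w b * (F b * (- (xt a - xt b) / (2 * P w b)))) = 1/2 * (F b * (xt b - XX w xt))"
    if b: "b < K" for b
  proof -
    have Pb: "0 < P w b" using P_pos[OF w b] .
    have "(\<Sum>a<K. P w a * P w b * (F b * (- (xt a - xt b) / (2 * P w b))))
        = (\<Sum>a<K. F b / 2 * (P w a * xt b - P w a * xt a))"
      using Pb by (intro sum.cong refl) (simp add: field_simps)
    also have "\<dots> = F b / 2 * ((\<Sum>a<K. P w a) * xt b - (\<Sum>a<K. P w a * xt a))"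
      by (simp add: sum_distrib_left[symmetric] sum_subtractf sum_distrib_right)
    also have "\<dots> = 1/2 * (F b * (xt b - XX w xt))" using P_sum[OF w] by (simp add: XX_def)
    finally show ?thesis .
  qed
  have "E2 w (\<lambda>a b. F b * (- (xt a - xt b) / (2 * P w b)))
      = (\<Sum>b<K. \<Sum>a<K. P w a * P w b * (F b * (- (xt a - xt b) / (2 * P w b))))"
    unfolding E2_def by (rule sum.swap)
  also have "\<dots> = (\<Sum>b<K. 1/2 * (F b * (xt b - XX w xt)))"
    by (rule sum.cong[OF refl], rule inner) auto
  finally show ?thesis by (simp add: sum_distrib_left)
qed

lemma sq_le: assumes "0 \<le> (u::real)" "u \<le> 1" "0 \<le> v" "v \<le> 1" shows "(u - v)^2 \<le> u + v"
proof -
  have "u * u \<le> u" using assms by (simp add: mult_left_le_one_le)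
  moreover have "v * v \<le> v" using assms by (simp add: mult_left_le_one_le)
  moreover have "0 \<le> u * v" using assms by simp
  moreover have "(u - v)^2 = u * u - 2 * (u * v) + v * v" by (simp add: power2_eq_square algebra_simps)
  ultimately show ?thesis by linarith
qed

lemma G3: assumes w: "wpos w" and xt: "\<And>i. i < K \<Longrightarrow> 0 \<le> xt i \<and> xt i \<le> 1"
  shows "E2 w (\<lambda>a b. (xt a - xt b)^2 / (4 * (1 - g) * P w a)) \<le> ((\<Sum>i<K. xt i) + real K * XX w xt) / (4 * (1 - g))"
proof -
  have "E2 w (\<lambda>a b. (xt a - xt b)^2 / (4 * (1 - g) * P w a))
      = (\<Sum>a<K. \<Sum>b<K. P w b * (xt a - xt b)^2 / (4 * (1 - g)))"
    unfolding E2_def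
  proof (intro sum.cong refl)
    fix a b assume a: "a \<in> {..<K}" and b: "b \<in> {..<K}"
    have "0 < P w a" using P_pos[OF w, of a] a by simp
    then have "P w a \<noteq> 0" by simp
    moreover have "1 - g \<noteq> 0" using g1 by simp
    ultimately show "P w a * P w b * ((xt a - xt b)\<^sup>2 / (4 * (1 - g) * P w a)) = P w b * (xt a - xt b)\<^sup>2 / (4 * (1 - g))"
      by (simp add: field_simps)
  qed
  also have "\<dots> \<le> (\<Sum>a<K. \<Sum>b<K. (P w b * xt a + P w b * xt b) / (4 * (1 - g)))"
  proof (intro sum_mono divide_right_mono)
    fix a b assume a: "a \<in> {..<K}" and b: "b \<in> {..<K}"
    have "(xt a - xt b)^2 \<le> xt a + xt b" using xt a b by (intro sq_le) auto
    then show "P w b * (xt a - xt b)^2 \<le> P w b * xt a + P w b * xt b"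
      using P_pos[OF w] b by (simp add: distrib_left[symmetric] mult_left_mono less_imp_le)
  qed (use g1 in auto)
  also have "\<dots> = (\<Sum>a<K. xt a + XX w xt) / (4 * (1 - g))"
    by (simp add: sum_divide_distrib[symmetric] sum.distrib sum_distrib_right[symmetric] P_sum[OF w] XX_def)
  also have "\<dots> = ((\<Sum>i<K. xt i) + real K * XX w xt) / (4 * (1 - g))"
    by (simp add: sum.distrib)
  finally show ?thesis .
qed

lemma G4: assumes w: "wpos w" and xt: "\<And>i. i < K \<Longrightarrow> 0 \<le> xt i \<and> xt i \<le> 1"
  shows "E2 w (\<lambda>a b. (xt a - xt b)^2 / (4 * (1 - g) * P w b)) \<le> ((\<Sum>i<K. xt i) + real K * XX w xt) / (4 * (1 - g))"
proof -
  have "E2 w (\<lambda>a b. (xt a - xt b)^2 / (4 * (1 - g) * P w b))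
      = (\<Sum>a<K. \<Sum>b<K. P w a * (xt a - xt b)^2 / (4 * (1 - g)))"
    unfolding E2_def
  proof (intro sum.cong refl)
    fix a b assume a: "a \<in> {..<K}" and b: "b \<in> {..<K}"
    have "0 < P w b" using P_pos[OF w, of b] b by simp
    then have "P w b \<noteq> 0" by simp
    moreover have "1 - g \<noteq> 0" using g1 by simp
    ultimately show "P w a * P w b * ((xt a - xt b)\<^sup>2 / (4 * (1 - g) * P w b)) = P w a * (xt a - xt b)\<^sup>2 / (4 * (1 - g))"
      by (simp add: field_simps)
  qed
  also have "\<dots> \<le> (\<Sum>a<K. \<Sum>b<K. (P w a * xt a + P w a * xt b) / (4 * (1 - g)))"
  proof (intro sum_mono divide_right_mono)
    fix a b assume a: "a \<in> {..<K}" and b: "b \<in> {..<K}"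
    have "(xt a - xt b)^2 \<le> xt a + xt b" using xt a b by (intro sq_le) auto
    then show "P w a * (xt a - xt b)^2 \<le> P w a * xt a + P w a * xt b"
      using P_pos[OF w] a by (simp add: distrib_left[symmetric] mult_left_mono less_imp_le)
  qed (use g1 in auto)
  also have "\<dots> = (\<Sum>a<K. real K * (P w a * xt a) + P w a * (\<Sum>i<K. xt i)) / (4 * (1 - g))"
    by (simp add: sum_divide_distrib[symmetric] sum.distrib sum_distrib_left)
  also have "\<dots> = ((\<Sum>i<K. xt i) + real K * XX w xt) / (4 * (1 - g))"
    by (simp add: sum.distrib sum_distrib_left[symmetric] sum_distrib_right[symmetric] P_sum[OF w] XX_def)
  finally show ?thesis .
qed

lemma sum_qq: assumes w: "wpos w"
  shows "(\<Sum>a<K. qq w a * (xt a - XX w xt)) = g * (XX w xt - (\<Sum>i<K. xt i) / real K) / (1 - g)"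
proof -
  have "(\<Sum>a<K. qq w a * (xt a - XX w xt))
     = (\<Sum>a<K. (P w a * xt a - P w a * XX w xt - g / real K * xt a + g / real K * XX w xt) / (1 - g))"
    unfolding qq_def q_eq[OF w] by (intro sum.cong refl) (simp add: algebra_simps diff_divide_distrib add_divide_distrib)
  also have "\<dots> = ((\<Sum>a<K. P w a * xt a) - (\<Sum>a<K. P w a) * XX w xt - g / real K * (\<Sum>a<K. xt a) + real K * (g / real K * XX w xt)) / (1 - g)"
    by (simp add: sum_divide_distrib[symmetric] sum.distrib sum_subtractf sum_distrib_left sum_distrib_right)
  also have "\<dots> = g * (XX w xt - (\<Sum>i<K. xt i) / real K) / (1 - g)"
    using P_sum[OF w] Kpos by (simp add: XX_def field_simps)
  finally show ?thesis .
qed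

lemma XX_nonneg: assumes w: "wpos w" and xt: "\<And>i. i < K \<Longrightarrow> 0 \<le> xt i \<and> xt i \<le> 1"
  shows "0 \<le> XX w xt"
  unfolding XX_def using P_pos[OF w] xt by (intro sum_nonneg mult_nonneg_nonneg) (auto simp: less_imp_le)

lemma half: "1/2 * Z + 1/2 * Z = (Z::real)" by simp

lemma sum_ind: assumes "j < K" shows "(\<Sum>b<K. (if j = b then 1 else 0) * f b) = (f j :: real)"
proof -
  have "(\<Sum>b<K. (if j = b then 1 else 0) * f b) = (\<Sum>b<K. if j = b then f b else 0)"
    by (rule sum.cong) auto
  also have "\<dots> = f j" using assms by simp
  finally show ?thesis .
qed

lemma round_E2:
  assumes w: "wpos w" and j: "j < K" and xt: "\<And>i. i < K \<Longrightarrow> 0 \<le> xt i \<and> xt i \<le> 1"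
  shows "E2 w (\<lambda>a b. Bf xt j w a b) \<le> - ((xt j - XX w xt) + 2 * g * ((\<Sum>i<K. xt i) / real K - XX w xt)
            - (exp 1 - 2) * g * ((\<Sum>i<K. xt i) / real K + XX w xt))"
proof -
  define X where "X = XX w xt"
  define Sx where "Sx = (\<Sum>i<K. xt i)"
  define U where "U = Sx / real K"
  define E3 where "E3 = E2 w (\<lambda>a b. (xt a - xt b)^2 / (4 * (1 - g) * P w a))"
  define E4 where "E4 = E2 w (\<lambda>a b. (xt a - xt b)^2 / (4 * (1 - g) * P w b))"
  have dec: "E2 w (\<lambda>a b. Bf xt j w a b) =
      c * (E2 w (\<lambda>a b. qq w a * ((xt a - xt b) / (2 * P w a))) + E2 w (\<lambda>a b. qq w b * (- (xt a - xt b) / (2 * P w b))))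
    + c * (2/3) * eta * (E3 + E4)
    - (c - 1) / real K * (E2 w (\<lambda>a b. 1 * ((xt a - xt b) / (2 * P w a))) + E2 w (\<lambda>a b. 1 * (- (xt a - xt b) / (2 * P w b))))
    - (E2 w (\<lambda>a b. (if j = a then 1 else 0) * ((xt a - xt b) / (2 * P w a))) + E2 w (\<lambda>a b. (if j = b then 1 else 0) * (- (xt a - xt b) / (2 * P w b))))"
    unfolding Bf_def[abs_def] ua_def ub_def E3_def E4_def
    by (simp only: E2_add E2_diff E2_cmult mult_1)
  have s1: "E2 w (\<lambda>a b. qq w a * ((xt a - xt b) / (2 * P w a))) + E2 w (\<lambda>a b. qq w b * (- (xt a - xt b) / (2 * P w b)))
      = g * (X - U) / (1 - g)"
    unfolding G1[OF w] G2[OF w] sum_qq[OF w] X_def U_def Sx_def by (rule half)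
  have s2: "E2 w (\<lambda>a b. 1 * ((xt a - xt b) / (2 * P w a))) + E2 w (\<lambda>a b. 1 * (- (xt a - xt b) / (2 * P w b)))
      = Sx - real K * X"
    unfolding G1[OF w] G2[OF w] by (simp add: X_def Sx_def sum_subtractf)
  have s3: "E2 w (\<lambda>a b. (if j = a then 1 else 0) * ((xt a - xt b) / (2 * P w a))) + E2 w (\<lambda>a b. (if j = b then 1 else 0) * (- (xt a - xt b) / (2 * P w b)))
      = xt j - X"
    unfolding G1[OF w] G2[OF w] sum_ind[OF j] by (simp add: X_def)
  have s4: "E3 + E4 \<le> (Sx + real K * X) / (2 * (1 - g))"
  proof -
    have q: "\<And>z y :: real. z / (4 * y) + z / (4 * y) = z / (2 * y)"
      by (case_tac "y = 0") (simp_all add: field_simps)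
    have g3: "E3 \<le> (Sx + real K * X) / (4 * (1 - g))"
      unfolding E3_def Sx_def X_def by (rule G3[OF w]) (use xt in blast)
    have g4: "E4 \<le> (Sx + real K * X) / (4 * (1 - g))"
      unfolding E4_def Sx_def X_def by (rule G4[OF w]) (use xt in blast)
    have "E3 + E4 \<le> (Sx + real K * X) / (4 * (1 - g)) + (Sx + real K * X) / (4 * (1 - g))"
      using g3 g4 by (rule add_mono)
    also have "\<dots> = (Sx + real K * X) / (2 * (1 - g))" by (rule q)
    finally show ?thesis .
  qed
  have X0: "0 \<le> X" unfolding X_def by (rule XX_nonneg[where xt=xt, OF w xt])
  have U0: "0 \<le> U" unfolding U_def Sx_def using xt Kpos by (intro divide_nonneg_pos sum_nonneg) auto
  have c0: "0 \<le> c" using c_ge1 by simp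
  have t1: "c * (g * (X - U) / (1 - g)) = (1 + 2*g) * g * (X - U)"
    using g1 by (simp add: c_def field_simps)
  have t2: "c * (2/3) * eta * (E3 + E4) \<le> c * (2/3) * eta * ((Sx + real K * X) / (2 * (1 - g)))"
    using s4 c0 eta_pos by (intro mult_left_mono) auto
  have t2': "c * (2/3) * eta * ((Sx + real K * X) / (2 * (1 - g))) = (1 + 2*g) * g * (U + X) / 3"
    using g1 Kpos by (simp add: c_def eta_def U_def field_simps)
  have t3: "(c - 1) / real K * (Sx - real K * X) = g * (1 - 2*g) * (U - X)"
    using Kpos by (simp add: c_eq U_def field_simps)
  have t4: "(1 + 2*g) * g * (U + X) / 3 \<le> (exp 1 - 2) * g * (U + X)"
  proof -
    have "(1 + 2*g) / 3 \<le> exp 1 - 2" using e_ge g1 by simp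
    moreover have "0 \<le> g * (U + X)" using g0 U0 X0 by simp
    ultimately have "(1 + 2*g) / 3 * (g * (U + X)) \<le> (exp 1 - 2) * (g * (U + X))"
      by (intro mult_right_mono) auto
    then show ?thesis by (simp add: algebra_simps)
  qed
  have "E2 w (\<lambda>a b. Bf xt j w a b) = (1 + 2*g) * g * (X - U) + c * (2/3) * eta * (E3 + E4) - g * (1 - 2*g) * (U - X) - (xt j - X)"
    unfolding dec s1 s2 s3 t1 t3 by simp
  also have "\<dots> \<le> (1 + 2*g) * g * (X - U) + (exp 1 - 2) * g * (U + X) - g * (1 - 2*g) * (U - X) - (xt j - X)"
    using t2 t2' t4 by linarith
  also have "\<dots> = - ((xt j - X) + 2 * g * (U - X) - (exp 1 - 2) * g * (U + X))"
    by (simp add: algebra_simps)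
  finally show ?thesis unfolding X_def U_def Sx_def .
qed

lemma round:
  assumes w: "wpos w" and j: "j < K" and xt: "\<And>i. i < K \<Longrightarrow> 0 \<le> xt i \<and> xt i \<le> 1"
  shows "E2 w (\<lambda>a b. Phi j (rex3_update K g xt w (a, b))) \<le> Phi j w - ((xt j - XX w xt) + 2 * g * ((\<Sum>i<K. xt i) / real K - XX w xt)
            - (exp 1 - 2) * g * ((\<Sum>i<K. xt i) / real K + XX w xt))"
proof -
  have "E2 w (\<lambda>a b. Phi j (rex3_update K g xt w (a, b))) \<le> E2 w (\<lambda>a b. Phi j w + Bf xt j w a b)"
    using pathwise[where xt=xt, OF w _ _ j xt] by (intro E2_mono[OF w]) auto
  also have "\<dots> = Phi j w + E2 w (\<lambda>a b. Bf xt j w a b)"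
    by (simp only: E2_add E2_const[OF w])
  finally show ?thesis using round_E2[where xt=xt, OF w j xt] by linarith
qed


definition Ut :: "nat \<Rightarrow> real" where "Ut t = (\<Sum>i<K. x t i) / real K"
definition rr :: "nat \<Rightarrow> nat \<Rightarrow> (nat \<Rightarrow> real) \<Rightarrow> real" where
  "rr j t w = (x t j - XX w (x t)) + 2 * g * (Ut t - XX w (x t)) - (exp 1 - 2) * g * (Ut t + XX w (x t))"
abbreviation "EW n f \<equiv> measure_pmf.expectation (rex3_weights K g x n) f"

lemma Phi_init: "Phi j (\<lambda>_. 1) = real K / g * ln (real K)"
proof -
  have "c * ln (real K) - (c - 1) * ln (real K) = ln (real K)" by (simp add: algebra_simps)
  then show ?thesis using Kpos g0 by (simp add: Phi_def eta_def)
qed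

lemma Phi_nonneg: assumes w: "wpos w" and j: "j < K" shows "0 \<le> Phi j w"
proof -
  define W where "W = (\<Sum>i<K. w i)"
  have Wp: "0 < W" using W_pos[OF w] by (simp add: W_def)
  have wj: "0 < w j" using w j by (simp add: wpos_def)
  have "w j \<le> W" unfolding W_def using w j
    by (intro member_le_sum) (auto simp: wpos_def less_imp_le)
  then have l1: "ln (w j) \<le> ln W" using wj by simp
  define m where "m = W / real K"
  have mp: "0 < m" using Wp Kpos by (simp add: m_def)
  have "(\<Sum>i<K. ln (w i)) \<le> (\<Sum>i<K. w i / m - 1 + ln m)"
  proof (intro sum_mono)
    fix i assume i: "i \<in> {..<K}"
    have wi: "0 < w i" using w i by (simp add: wpos_def)
    have "ln (w i) = ln (w i / m) + ln m" using wi mp by (simp add: ln_div)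
    also have "\<dots> \<le> w i / m - 1 + ln m" using wi mp by (simp add: ln_le_minus_one)
    finally show "ln (w i) \<le> w i / m - 1 + ln m" .
  qed
  also have "\<dots> = W / m - real K + real K * ln m"
    by (simp add: sum.distrib sum_subtractf sum_divide_distrib[symmetric] W_def)
  also have "\<dots> = real K * (ln W - ln (real K))"
    using mp Kpos Wp by (simp add: m_def ln_div)
  finally have l2: "(\<Sum>i<K. ln (w i)) / real K \<le> ln W - ln (real K)"
    using Kpos by (simp add: divide_simps mult.commute)
  have "(c - 1) * (ln (real K) + (\<Sum>i<K. ln (w i)) / real K) \<le> (c - 1) * ln W"
    using l2 c_ge1 by (intro mult_left_mono) auto
  then have "0 \<le> c * ln W - (c - 1) * (ln (real K) + (\<Sum>i<K. ln (w i)) / real K) - ln (w j)"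
    using l1 by (simp add: algebra_simps)
  then show ?thesis unfolding Phi_def W_def[symmetric] using eta_pos by simp
qed

lemma xbt: "t \<in> {1..T} \<Longrightarrow> i < K \<Longrightarrow> 0 \<le> x t i \<and> x t i \<le> 1" by (rule xb)

lemma main_ind:
  assumes j: "j < K"
  shows "n \<le> T \<Longrightarrow> EW n (Phi j) + (\<Sum>t\<in>{1..n}. EW (t - 1) (rr j t)) \<le> real K / g * ln (real K)"
proof (induction n)
  case 0
  then show ?case by (simp add: E_fin Phi_init)
next
  case (Suc n)
  have fin: "finite (set_pmf (rex3_weights K g x n))" using weights_inv by blast
  have inv: "\<And>w. w \<in> set_pmf (rex3_weights K g x n) \<Longrightarrow> wpos w" using weights_inv by blast
  have finp: "finite (set_pmf (rex3_pairs K g w))" if "wpos w" for w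
    using set_pairs[OF that] by (rule finite_subset) auto
  have xt: "\<And>i. i < K \<Longrightarrow> 0 \<le> x (Suc n) i \<and> x (Suc n) i \<le> 1" using Suc.prems by (intro xbt) auto
  have "EW (Suc n) (Phi j) = EW n (\<lambda>w. measure_pmf.expectation (map_pmf (rex3_update K g (x (Suc n)) w) (rex3_pairs K g w)) (Phi j))"
    unfolding rex3_weights.simps(2) by (rule E_bind[OF fin]) (use finp inv in auto)
  also have "\<dots> = EW n (\<lambda>w. E2 w (\<lambda>a b. Phi j (rex3_update K g (x (Suc n)) w (a, b))))"
    unfolding E_fin[OF fin]
  proof (intro sum.cong refl)
    fix w assume "w \<in> set_pmf (rex3_weights K g x n)"
    then have w: "wpos w" by (rule inv)
    show "measure_pmf.expectation (map_pmf (rex3_update K g (x (Suc n)) w) (rex3_pairs K g w)) (Phi j) * pmf (rex3_weights K g x n) w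
       = E2 w (\<lambda>a b. Phi j (rex3_update K g (x (Suc n)) w (a, b))) * pmf (rex3_weights K g x n) w"
      by (simp add: E_pairs[OF w])
  qed
  also have "\<dots> \<le> EW n (\<lambda>w. Phi j w - rr j (Suc n) w)"
  proof (rule E_mono_fin[OF fin])
    fix w assume "w \<in> set_pmf (rex3_weights K g x n)"
    then have w: "wpos w" by (rule inv)
    show "E2 w (\<lambda>a b. Phi j (rex3_update K g (x (Suc n)) w (a, b))) \<le> Phi j w - rr j (Suc n) w"
      using round[OF w j xt] by (simp add: rr_def Ut_def)
  qed
  also have "\<dots> = EW n (Phi j) - EW n (rr j (Suc n))" by (rule E_diff_fin[OF fin])
  finally have step: "EW (Suc n) (Phi j) \<le> EW n (Phi j) - EW n (rr j (Suc n))" .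
  have IH: "EW n (Phi j) + (\<Sum>t\<in>{1..n}. EW (t - 1) (rr j t)) \<le> real K / g * ln (real K)"
    using Suc by simp
  have "(\<Sum>t\<in>{1..Suc n}. EW (t - 1) (rr j t)) = (\<Sum>t\<in>{1..n}. EW (t - 1) (rr j t)) + EW n (rr j (Suc n))"
    by (simp add: sum.cl_ivl_Suc)
  then show ?case using step IH by linarith
qed

lemma E2_avg: assumes w: "wpos w" shows "E2 w (\<lambda>a b. (xt a + xt b) / 2) = XX w xt"
proof -
  have "E2 w (\<lambda>a b. (xt a + xt b) / 2) = 1/2 * E2 w (\<lambda>a b. xt a * 1) + 1/2 * E2 w (\<lambda>a b. 1 * xt b)"
    by (simp add: E2_def sum.distrib sum_distrib_left algebra_simps add_divide_distrib)
  also have "E2 w (\<lambda>a b. xt a * 1) = (\<Sum>a<K. P w a * xt a) * (\<Sum>b<K. P w b)"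
    unfolding E2_def sum_product by (simp add: ac_simps)
  also have "E2 w (\<lambda>a b. 1 * xt b) = (\<Sum>a<K. P w a) * (\<Sum>b<K. P w b * xt b)"
    unfolding E2_def sum_product by (simp add: ac_simps)
  finally show ?thesis using P_sum[OF w] by (simp add: XX_def)
qed

lemma gain_eq: "rex3_expected_gain K g T x = (\<Sum>t\<in>{1..T}. EW (t - 1) (\<lambda>w. XX w (x t)))"
  unfolding rex3_expected_gain_def
proof (intro sum.cong refl)
  fix t assume t: "t \<in> {1..T}"
  have fin: "finite (set_pmf (rex3_weights K g x (t - 1)))" using weights_inv by blast
  have inv: "\<And>w. w \<in> set_pmf (rex3_weights K g x (t - 1)) \<Longrightarrow> wpos w" using weights_inv by blast
  have finp: "finite (set_pmf (rex3_pairs K g w))" if "wpos w" for w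
    using set_pairs[OF that] by (rule finite_subset) auto
  have "measure_pmf.expectation (rex3_choice K g x t) (\<lambda>(a, b). (x t a + x t b) / 2)
      = EW (t - 1) (\<lambda>w. measure_pmf.expectation (rex3_pairs K g w) (\<lambda>(a, b). (x t a + x t b) / 2))"
    unfolding rex3_choice_def by (rule E_bind[OF fin]) (use finp inv in auto)
  also have "\<dots> = EW (t - 1) (\<lambda>w. XX w (x t))"
    unfolding E_fin[OF fin]
  proof (intro sum.cong refl)
    fix w assume "w \<in> set_pmf (rex3_weights K g x (t - 1))"
    then have w: "wpos w" by (rule inv)
    show "measure_pmf.expectation (rex3_pairs K g w) (\<lambda>(a, b). (x t a + x t b) / 2) * pmf (rex3_weights K g x (t - 1)) w
       = XX w (x t) * pmf (rex3_weights K g x (t - 1)) w"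
      by (simp add: E_pairs[OF w] E2_avg[OF w])
  qed
  finally show "measure_pmf.expectation (rex3_choice K g x t) (\<lambda>(a, b). (x t a + x t b) / 2) = EW (t - 1) (\<lambda>w. XX w (x t))" .
qed

lemma final_alg:
  fixes Gj G V A gg e :: real
  assumes "Gj + 2*gg*V - (e-2)*gg*V - (1 + 2*gg + (e-2)*gg)*G \<le> A"
  shows "Gj - G \<le> A + gg*(e*G - (4-e)*V)"
proof -
  have "A + gg*(e*G - (4-e)*V) - (Gj - G) = A - (Gj + 2*gg*V - (e-2)*gg*V - (1 + 2*gg + (e-2)*gg)*G)"
    by (simp add: algebra_simps)
  then show ?thesis using assms by linarith
qed

lemma final:
  assumes j: "j < K"
  shows "(\<Sum>t\<in>{1..T}. x t j) - rex3_expected_gain K g T x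
     \<le> real K / g * ln (real K) + g * (exp 1 * rex3_expected_gain K g T x - (4 - exp 1) * EG_unif K T x)"
proof -
  have fin: "\<And>n. finite (set_pmf (rex3_weights K g x n))" using weights_inv by blast
  have inv: "\<And>n w. w \<in> set_pmf (rex3_weights K g x n) \<Longrightarrow> wpos w" using weights_inv by blast
  have "0 \<le> EW T (Phi j)"
    unfolding E_fin[OF fin] using Phi_nonneg[OF inv j] by (intro sum_nonneg mult_nonneg_nonneg) auto
  then have S: "(\<Sum>t\<in>{1..T}. EW (t - 1) (rr j t)) \<le> real K / g * ln (real K)"
    using main_ind[OF j order.refl] by linarith
  define \<beta> where "\<beta> = - (1 + 2*g + (exp 1 - 2)*g)"
  have rr_aff: "rr j t = (\<lambda>w. (x t j + 2*g*Ut t - (exp 1 - 2)*g*Ut t) + \<beta> * XX w (x t))" for t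
    by (rule ext) (simp add: rr_def \<beta>_def algebra_simps)
  have "(\<Sum>t\<in>{1..T}. EW (t - 1) (rr j t))
      = (\<Sum>t\<in>{1..T}. (x t j + 2*g*Ut t - (exp 1 - 2)*g*Ut t) + \<beta> * EW (t - 1) (\<lambda>w. XX w (x t)))"
    unfolding rr_aff by (intro sum.cong refl E_affine fin)
  also have "\<dots> = (\<Sum>t\<in>{1..T}. x t j) + 2*g*(\<Sum>t\<in>{1..T}. Ut t) - (exp 1 - 2)*g*(\<Sum>t\<in>{1..T}. Ut t)
                   + \<beta> * rex3_expected_gain K g T x"
    unfolding gain_eq by (simp add: sum.distrib sum_subtractf sum_distrib_left)
  finally have S2: "(\<Sum>t\<in>{1..T}. x t j) + 2*g*(\<Sum>t\<in>{1..T}. Ut t) - (exp 1 - 2)*g*(\<Sum>t\<in>{1..T}. Ut t)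
                   + \<beta> * rex3_expected_gain K g T x \<le> real K / g * ln (real K)" using S by simp
  have V: "EG_unif K T x = (\<Sum>t\<in>{1..T}. Ut t)"
    unfolding EG_unif_def Ut_def by (simp add: sum_distrib_left sum_divide_distrib)
  have "\<beta> * rex3_expected_gain K g T x = - ((1 + 2*g + (exp 1 - 2)*g) * rex3_expected_gain K g T x)"
    by (simp only: \<beta>_def mult_minus_left)
  then have "(\<Sum>t\<in>{1..T}. x t j) + 2*g*(\<Sum>t\<in>{1..T}. Ut t) - (exp 1 - 2)*g*(\<Sum>t\<in>{1..T}. Ut t)
      - (1 + 2*g + (exp 1 - 2)*g) * rex3_expected_gain K g T x \<le> real K / g * ln (real K)"
    using S2 by linarith
  then show ?thesis unfolding V by (rule final_alg)
qed

end

theorem theorem1: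
  fixes K T :: nat and \<gamma> :: real and x :: "nat \<Rightarrow> nat \<Rightarrow> real"
  assumes "K \<ge> 2" and "T \<ge> 1"
    and "\<And>t i. t \<in> {1..T} \<Longrightarrow> i < K \<Longrightarrow> 0 \<le> x t i \<and> x t i \<le> 1"
    and "0 < \<gamma>" and "\<gamma> < 1 / 2"
  shows "G_max K T x - rex3_expected_gain K \<gamma> T x
         \<le> real K / \<gamma> * ln (real K)
            + \<gamma> * (exp 1 * rex3_expected_gain K \<gamma> T x - (4 - exp 1) * EG_unif K T x)"
proof -
  interpret rex K T \<gamma> x using assms by unfold_locales auto
  have "G_max K T x \<in> (\<lambda>i. \<Sum>t\<in>{1..T}. x t i) ` {..<K}"
  proof -
    have "(0::nat) \<in> {..<K}" using assms(1) by simp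
    then have ne: "(\<lambda>i. \<Sum>t\<in>{1..T}. x t i) ` {..<K} \<noteq> {}" by blast
    show ?thesis unfolding G_max_def by (rule Max_in) (use ne in auto)
  qed
  then obtain j where j: "j < K" and G: "G_max K T x = (\<Sum>t\<in>{1..T}. x t j)" by auto
  show ?thesis unfolding G using final[OF j] .
qed

end
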